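(* For every integer $p\ge 2$, the loop $C_p$ is isotopically transitive, i.e., its graph $M=\{(u,v,w)\in Q_{2p}^3 : w=u\ast v\}$ is acted on transitively by its autotopy group.
   Context: Let $Q_{2p}=\{x_\zeta : x\in\mathbb{Z}_p,\ \zeta\in\{0,1\}\}$. The loop $C_p$ is the operation on $Q_{2p}$ given by $x_\zeta\ast y_\xi=((-1)^\xi x+y+\zeta\xi)_{\zeta\oplus\xi}$, where the subscript arithmetic is modulo $2$ ($\oplus$) and the other arithmetic is modulo $p$. An isotopism of $Q_{2p}^3$ is a map $(u,v,w)\mapsto(\tau_1u,\tau_2v,\tau_3w)$ with $\tau_i$ permutations of $Q_{2p}$; the autotopy group of $M$ is the group of isotopisms mapping $M$ onto $M$. *)

theory Defs
  imports Main
begin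

text \<open>Elements x_zeta of Q_2p are pairs (x, zeta) with x in Z_p represented by
  {0..<p} and zeta in {0,1} represented by nat.\<close>

definition Q2p :: "int \<Rightarrow> (int \<times> nat) set" where
  "Q2p p = {0..<p} \<times> {0, 1}"

definition Cp :: "int \<Rightarrow> int \<times> nat \<Rightarrow> int \<times> nat \<Rightarrow> int \<times> nat" where
  "Cp p u v = (case u of (x, \<zeta>) \<Rightarrow> case v of (y, \<xi>) \<Rightarrow>
     (((-1) ^ \<xi> * x + y + int (\<zeta> * \<xi>)) mod p, (\<zeta> + \<xi>) mod 2))"

definition Cp_graph :: "int \<Rightarrow> ((int \<times> nat) \<times> (int \<times> nat) \<times> (int \<times> nat)) set" where
  "Cp_graph p = {(u, v, w). u \<in> Q2p p \<and> v \<in> Q2p p \<and> w = Cp p u v}"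

definition is_autotopy ::
  "'a set \<Rightarrow> ('a \<times> 'a \<times> 'a) set \<Rightarrow> ('a \<Rightarrow> 'a) \<Rightarrow> ('a \<Rightarrow> 'a) \<Rightarrow> ('a \<Rightarrow> 'a) \<Rightarrow> bool" where
  "is_autotopy Q M \<tau>1 \<tau>2 \<tau>3 \<longleftrightarrow>
     bij_betw \<tau>1 Q Q \<and> bij_betw \<tau>2 Q Q \<and> bij_betw \<tau>3 Q Q \<and>
     (\<lambda>(u, v, w). (\<tau>1 u, \<tau>2 v, \<tau>3 w)) ` M = M"

definition isotopically_transitive :: "'a set \<Rightarrow> ('a \<times> 'a \<times> 'a) set \<Rightarrow> bool" where
  "isotopically_transitive Q M \<longleftrightarrow>
     (\<forall>t\<in>M. \<forall>t'\<in>M. \<exists>\<tau>1 \<tau>2 \<tau>3. is_autotopy Q M \<tau>1 \<tau>2 \<tau>3 \<and>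
        (case t of (u, v, w) \<Rightarrow> (\<tau>1 u, \<tau>2 v, \<tau>3 w)) = t')"

end

theory Submission
  imports Defs
begin

lemma hom_aut:
  assumes "bij_betw \<alpha> Q Q" "bij_betw \<beta> Q Q" "bij_betw \<gamma> Q Q"
    and h: "\<And>u v. u \<in> Q \<Longrightarrow> v \<in> Q \<Longrightarrow> \<gamma> (f u v) = f (\<alpha> u) (\<beta> v)"
  shows "is_autotopy Q {(u,v,w). u \<in> Q \<and> v \<in> Q \<and> w = f u v} \<alpha> \<beta> \<gamma>"
  unfolding is_autotopy_def
proof (intro conjI assms equalityI subsetI)
  fix t assume "t \<in> (\<lambda>(u, v, w). (\<alpha> u, \<beta> v, \<gamma> w)) ` {(u,v,w). u \<in> Q \<and> v \<in> Q \<and> w = f u v}"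
  then show "t \<in> {(u,v,w). u \<in> Q \<and> v \<in> Q \<and> w = f u v}"
    using assms(1,2) h by (auto simp: bij_betw_def)
next
  fix t assume "t \<in> {(u,v,w). u \<in> Q \<and> v \<in> Q \<and> w = f u v}"
  then obtain u v where t: "t = (u, v, f u v)" "u \<in> Q" "v \<in> Q" by auto
  define u0 where "u0 = inv_into Q \<alpha> u"
  define v0 where "v0 = inv_into Q \<beta> v"
  have u0: "u0 \<in> Q" "\<alpha> u0 = u" using assms(1) t(2) unfolding u0_def
    by (auto intro: bij_betw_inv_into_right inv_into_into simp: bij_betw_def)
  have v0: "v0 \<in> Q" "\<beta> v0 = v" using assms(2) t(3) unfolding v0_def
    by (auto intro: bij_betw_inv_into_right inv_into_into simp: bij_betw_def)
  have "(\<lambda>(u, v, w). (\<alpha> u, \<beta> v, \<gamma> w)) (u0, v0, f u0 v0) = t"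
    using t u0 v0 h by auto
  moreover have "(u0, v0, f u0 v0) \<in> {(u,v,w). u \<in> Q \<and> v \<in> Q \<and> w = f u v}"
    using u0 v0 by auto
  ultimately show "t \<in> (\<lambda>(u, v, w). (\<alpha> u, \<beta> v, \<gamma> w)) ` {(u,v,w). u \<in> Q \<and> v \<in> Q \<and> w = f u v}"
    by (metis (no_types, lifting) image_eqI)
qed

lemma trans_generic:
  assumes e: "e \<in> Q"
    and closed: "\<And>u v. u \<in> Q \<Longrightarrow> v \<in> Q \<Longrightarrow> f u v \<in> Q"
    and ex: "\<And>a b. a \<in> Q \<Longrightarrow> b \<in> Q \<Longrightarrow> \<exists>\<alpha> \<beta> \<gamma>. bij_betw \<alpha> Q Q \<and> bij_betw \<beta> Q Q \<and>
       bij_betw \<gamma> Q Q \<and> (\<forall>u\<in>Q. \<forall>v\<in>Q. \<gamma> (f u v) = f (\<alpha> u) (\<beta> v)) \<and> \<alpha> e = a \<and> \<beta> e = b"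
  shows "isotopically_transitive Q {(u,v,w). u \<in> Q \<and> v \<in> Q \<and> w = f u v}"
  unfolding isotopically_transitive_def
proof (intro ballI)
  fix t t' assume "t \<in> {(u,v,w). u \<in> Q \<and> v \<in> Q \<and> w = f u v}"
    "t' \<in> {(u,v,w). u \<in> Q \<and> v \<in> Q \<and> w = f u v}"
  then obtain u v u' v' where t: "t = (u, v, f u v)" "u \<in> Q" "v \<in> Q"
    and t': "t' = (u', v', f u' v')" "u' \<in> Q" "v' \<in> Q" by auto
  obtain \<alpha> \<beta> \<gamma> where A: "bij_betw \<alpha> Q Q" "bij_betw \<beta> Q Q"
       "bij_betw \<gamma> Q Q" "\<forall>u\<in>Q. \<forall>v\<in>Q. \<gamma> (f u v) = f (\<alpha> u) (\<beta> v)" "\<alpha> e = u" "\<beta> e = v"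
    using ex[OF t(2,3)] by blast
  obtain \<alpha>' \<beta>' \<gamma>' where B: "bij_betw \<alpha>' Q Q" "bij_betw \<beta>' Q Q"
       "bij_betw \<gamma>' Q Q" "\<forall>u\<in>Q. \<forall>v\<in>Q. \<gamma>' (f u v) = f (\<alpha>' u) (\<beta>' v)" "\<alpha>' e = u'" "\<beta>' e = v'"
    using ex[OF t'(2,3)] by blast
  define a2 where "a2 = \<alpha>' \<circ> inv_into Q \<alpha>"
  define b2 where "b2 = \<beta>' \<circ> inv_into Q \<beta>"
  define c2 where "c2 = \<gamma>' \<circ> inv_into Q \<gamma>"
  have bij2: "bij_betw a2 Q Q" "bij_betw b2 Q Q" "bij_betw c2 Q Q"
    unfolding a2_def b2_def c2_def using A B
    by (auto intro: bij_betw_trans bij_betw_inv_into)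
  have hom2: "c2 (f x y) = f (a2 x) (b2 y)" if "x \<in> Q" "y \<in> Q" for x y
  proof -
    have ix: "inv_into Q \<alpha> x \<in> Q" "\<alpha> (inv_into Q \<alpha> x) = x"
      using A(1) that(1) by (auto intro: bij_betw_inv_into_right inv_into_into simp: bij_betw_def)
    have iy: "inv_into Q \<beta> y \<in> Q" "\<beta> (inv_into Q \<beta> y) = y"
      using A(2) that(2) by (auto intro: bij_betw_inv_into_right inv_into_into simp: bij_betw_def)
    have "\<gamma> (f (inv_into Q \<alpha> x) (inv_into Q \<beta> y)) = f x y"
      using A(4) ix iy by auto
    hence "inv_into Q \<gamma> (f x y) = f (inv_into Q \<alpha> x) (inv_into Q \<beta> y)"
      using A(3) closed[OF ix(1) iy(1)] by (metis bij_betw_def inv_into_f_f)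
    thus ?thesis unfolding a2_def b2_def c2_def using B(4) ix iy by auto
  qed
  have aut: "is_autotopy Q {(u,v,w). u \<in> Q \<and> v \<in> Q \<and> w = f u v} a2 b2 c2"
    by (rule hom_aut[where f=f, OF bij2 hom2])
  have "inv_into Q \<alpha> u = e" using A(1,5) e by (metis bij_betw_def inv_into_f_f)
  hence au: "a2 u = u'" using B(5) by (simp add: a2_def)
  have "inv_into Q \<beta> v = e" using A(2,6) e by (metis bij_betw_def inv_into_f_f)
  hence bv: "b2 v = v'" using B(6) by (simp add: b2_def)
  show "\<exists>\<tau>1 \<tau>2 \<tau>3. is_autotopy Q {(u,v,w). u \<in> Q \<and> v \<in> Q \<and> w = f u v} \<tau>1 \<tau>2 \<tau>3 \<and>
        (case t of (u, v, w) \<Rightarrow> (\<tau>1 u, \<tau>2 v, \<tau>3 w)) = t'"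
    using aut au bv hom2[OF t(2,3)] t t' by auto
qed

definition aff :: "int \<Rightarrow> int \<Rightarrow> int \<Rightarrow> int \<Rightarrow> nat \<Rightarrow> int \<times> nat \<Rightarrow> int \<times> nat" where
  "aff p s g0 g1 \<pi> u = ((s * fst u + (if snd u = 0 then g0 else g1)) mod p, (snd u + \<pi>) mod 2)"

lemma aff_bij:
  assumes p: "p > 0" and s: "s = 1 \<or> s = -1" and pi: "\<pi> < 2"
  shows "bij_betw (aff p s g0 g1 \<pi>) (Q2p p) (Q2p p)"
proof -
  have sub: "aff p s g0 g1 \<pi> ` Q2p p \<subseteq> Q2p p"
    using p by (auto simp: aff_def Q2p_def)
  have inj: "inj_on (aff p s g0 g1 \<pi>) (Q2p p)"
  proof (rule inj_onI)
    fix u v assume u: "u \<in> Q2p p" and v: "v \<in> Q2p p" and eq: "aff p s g0 g1 \<pi> u = aff p s g0 g1 \<pi> v"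
    obtain x z where ux: "u = (x, z)" by (cases u)
    obtain y c where vy: "v = (y, c)" by (cases v)
    have pi01: "\<pi> = 0 \<or> \<pi> = 1" using pi by auto
    have zc: "z = c" using eq u v pi01 unfolding ux vy aff_def Q2p_def by auto
    have "(s * x + (if z = 0 then g0 else g1)) mod p = (s * y + (if z = 0 then g0 else g1)) mod p"
      using eq zc unfolding ux vy aff_def by simp
    hence "(s * x) mod p = (s * y) mod p" by (metis add_diff_cancel_right' mod_diff_cong)
    hence "x mod p = y mod p" using s
      by (auto dest: mod_minus_cong)
    hence "x = y" using u v unfolding ux vy Q2p_def by auto
    thus "u = v" using zc ux vy by simp
  qed
  show ?thesis using endo_inj_surj[OF _ sub inj] inj
    by (simp add: bij_betw_def Q2p_def)
qed



lemma Q2p_cases: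
  assumes "u \<in> Q2p p"
  obtains x where "u = (x, 0)" | x where "u = (x, 1)"
  using assms unfolding Q2p_def by auto

lemma dvdm: "(p::int) dvd (a mod p - a)"
  by (simp add: mod_eq_dvd_iff[symmetric])
lemma mm1: "((c::int) + a mod p - b) mod p = (c + a - b) mod p"
proof -
  have "(c + a mod p - b) - (c + a - b) = a mod p - a" by simp
  thus ?thesis using dvdm[of p a] by (simp add: mod_eq_dvd_iff)
qed
lemma mm2: "((c::int) - a mod p - b) mod p = (c - a - b) mod p"
proof -
  have "(c - a mod p - b) - (c - a - b) = -(a mod p - a)" by simp
  thus ?thesis using dvdm[of p a] by (simp add: mod_eq_dvd_iff)
qed
lemma mm3: "((c::int) - a mod p + b) mod p = (c - a + b) mod p"
proof -
  have "(c - a mod p + b) - (c - a + b) = -(a mod p - a)" by simp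
  thus ?thesis using dvdm[of p a] by (simp add: mod_eq_dvd_iff)
qed

lemma hom00: "aff p 1 (a+b) (a+b) 0 (Cp p u v) = Cp p (aff p 1 a a 0 u) (aff p 1 b (b+2*a) 0 v)"
  if "u \<in> Q2p p" "v \<in> Q2p p"
  using that unfolding Q2p_def by (auto simp: aff_def Cp_def; (simp only: mod_eq_dvd_iff)?; (simp only: minus_mult_div_eq_mod[symmetric])?; simp add: algebra_simps)

lemma hom10: "aff p (-1) (a+b) b 1 (Cp p u v) = Cp p (aff p (-1) a 0 1 u) (aff p (-1) b (a+b-1) 0 v)"
  if "u \<in> Q2p p" "v \<in> Q2p p"
  using that unfolding Q2p_def by (auto simp: aff_def Cp_def; (simp only: mod_eq_dvd_iff)?; (simp only: minus_mult_div_eq_mod[symmetric])?; simp add: algebra_simps)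

lemma hom01: "aff p 1 (b-a) (1+b) 1 (Cp p u v) = Cp p (aff p (-1) a 0 0 u) (aff p 1 b (1+b-a) 1 v)"
  if "u \<in> Q2p p" "v \<in> Q2p p"
  using that unfolding Q2p_def by (auto simp: aff_def Cp_def; (simp only: mod_eq_dvd_iff)?; (simp only: minus_mult_div_eq_mod[symmetric])?; simp add: algebra_simps)

lemma hom11: "aff p (-1) (b-a+1) b 0 (Cp p u v) = Cp p (aff p 1 a 0 1 u) (aff p (-1) b (b-a) 1 v)"
  if "u \<in> Q2p p" "v \<in> Q2p p"
  using that unfolding Q2p_def by (auto simp: aff_def Cp_def; (simp only: mod_eq_dvd_iff)?; (simp only: minus_mult_div_eq_mod[symmetric])?; simp add: algebra_simps)

theorem proposition6:
  fixes p :: int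
  assumes "p \<ge> 2"
  shows "isotopically_transitive (Q2p p) (Cp_graph p)"
proof -
  have p: "p > 0" using assms by simp
  have graph: "Cp_graph p = {(u,v,w). u \<in> Q2p p \<and> v \<in> Q2p p \<and> w = Cp p u v}"
    by (simp add: Cp_graph_def)
  show ?thesis unfolding graph
  proof (rule trans_generic[where e="(0,0)"])
    show "(0, 0) \<in> Q2p p" using p by (simp add: Q2p_def)
  next
    fix u v assume "u \<in> Q2p p" "v \<in> Q2p p"
    then show "Cp p u v \<in> Q2p p" using p by (auto simp: Q2p_def Cp_def)
  next
    fix ua ub assume ua: "ua \<in> Q2p p" and ub: "ub \<in> Q2p p"
    obtain a z where az: "ua = (a, z)" "0 \<le> a" "a < p" "z = 0 \<or> z = 1"
      using ua by (auto simp: Q2p_def)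
    obtain b c where bc: "ub = (b, c)" "0 \<le> b" "b < p" "c = 0 \<or> c = 1"
      using ub by (auto simp: Q2p_def)
    have am: "a mod p = a" and bm: "b mod p = b" using az bc by auto
    consider "z = 0" "c = 0" | "z = 1" "c = 0" | "z = 0" "c = 1" | "z = 1" "c = 1"
      using az(4) bc(4) by blast
    then show "\<exists>\<alpha> \<beta> \<gamma>. bij_betw \<alpha> (Q2p p) (Q2p p) \<and> bij_betw \<beta> (Q2p p) (Q2p p) \<and>
       bij_betw \<gamma> (Q2p p) (Q2p p) \<and> (\<forall>u\<in>Q2p p. \<forall>v\<in>Q2p p. \<gamma> (Cp p u v) = Cp p (\<alpha> u) (\<beta> v))
       \<and> \<alpha> (0,0) = ua \<and> \<beta> (0,0) = ub"
    proof cases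
      case 1
      show ?thesis
        by (rule exI[of _ "aff p 1 a a 0"], rule exI[of _ "aff p 1 b (b+2*a) 0"],
            rule exI[of _ "aff p 1 (a+b) (a+b) 0"])
          (use p hom00 1 az bc am bm in \<open>auto intro!: aff_bij simp: aff_def\<close>)
    next
      case 2
      show ?thesis
        by (rule exI[of _ "aff p (-1) a 0 1"], rule exI[of _ "aff p (-1) b (a+b-1) 0"],
            rule exI[of _ "aff p (-1) (a+b) b 1"])
          (use p hom10 2 az bc am bm in \<open>auto intro!: aff_bij simp: aff_def\<close>)
    next
      case 3
      show ?thesis
        by (rule exI[of _ "aff p (-1) a 0 0"], rule exI[of _ "aff p 1 b (1+b-a) 1"],
            rule exI[of _ "aff p 1 (b-a) (1+b) 1"])
          (use p hom01 3 az bc am bm in \<open>auto intro!: aff_bij simp: aff_def\<close>)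
    next
      case 4
      show ?thesis
        by (rule exI[of _ "aff p 1 a 0 1"], rule exI[of _ "aff p (-1) b (b-a) 1"],
            rule exI[of _ "aff p (-1) (b-a+1) b 0"])
          (use p hom11 4 az bc am bm in \<open>auto intro!: aff_bij simp: aff_def\<close>)
    qed
  qed
qed

end
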